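(* Let $1<p<\infty$, $N\ge1$, $0\le R_1<R_2<\infty$, and let $f$ satisfy: $(f_{\mathrm{reg}})$ $f\in C([0,\infty))\cap C^1((0,\infty))$; $(f_{\mathrm{eq}})$ $f(0)=f(1)=0$, $f(s)<0$ for $0<s<1$, $f(s)>0$ for $s>1$; $(f_0)$ there exists $C_0\in[0,\infty)$ with $\lim_{s\to0^+}f(s)/s^{p-1}=-C_0$; $(f_1)$ there exists $C_1\in[0,\infty]$ with $\lim_{s\to1}\frac{f(s)}{|s-1|^{p-2}(s-1)}=C_1$. Define $\hat f(s)=f(s)$ for $s\ge0$ and $\hat f(s)=0$ for $s<0$, and $\varphi_p(s)=|s|^{p-2}s$. Let $u$ be a solution of $$-\big(r^{N-1}\varphi_p(u')\big)'=r^{N-1}\hat f(u)\ \text{in }(R_1,R_2),\qquad u'(R_1)=u'(R_2)=0.$$ Then either $u\equiv -C$ for some constant $C\ge0$, or $u(r)>0$ for every $r\in[R_1,R_2]$.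
   Context: A solution means a function $u$ such that $u$ and $r^{N-1}\varphi_p(u')$ belong to $C^1([R_1,R_2])$ and the equation holds pointwise, together with the boundary conditions. *)

theory Defs
  imports "HOL-Analysis.Analysis"
begin

definition phi_p :: "real \<Rightarrow> real \<Rightarrow> real" where
  "phi_p p s = \<bar>s\<bar> powr (p - 2) * s"

definition fhat :: "(real \<Rightarrow> real) \<Rightarrow> real \<Rightarrow> real" where
  "fhat f s = (if s \<ge> 0 then f s else 0)"

definition radial_solution ::
  "real \<Rightarrow> nat \<Rightarrow> (real \<Rightarrow> real) \<Rightarrow> real \<Rightarrow> real \<Rightarrow> (real \<Rightarrow> real) \<Rightarrow> bool" where
  "radial_solution p N f R1 R2 u \<longleftrightarrow>
     (\<exists>u' w'.
        (\<forall>r\<in>{R1..R2}. (u has_real_derivative u' r) (at r within {R1..R2})) \<and>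
        continuous_on {R1..R2} u' \<and>
        (\<forall>r\<in>{R1..R2}. ((\<lambda>t. t ^ (N - 1) * phi_p p (u' t)) has_real_derivative w' r)
                            (at r within {R1..R2})) \<and>
        continuous_on {R1..R2} w' \<and>
        (\<forall>r\<in>{R1<..<R2}. - w' r = r ^ (N - 1) * fhat f (u r)) \<and>
        u' R1 = 0 \<and> u' R2 = 0)"

end

theory Submission
  imports Defs
begin

lemma mono_H:
  fixes g g' :: "real \<Rightarrow> real"
  assumes "a \<le> b" "continuous_on {a..b} g"
    "\<And>x. a < x \<Longrightarrow> x < b \<Longrightarrow> (g has_real_derivative g' x) (at x)"
    "\<And>x. a < x \<Longrightarrow> x < b \<Longrightarrow> g' x \<ge> 0"
  shows "g a \<le> g b"
  using DERIV_nonneg_imp_increasing_open[OF assms(1) _ assms(2)] assms(3,4) by blast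

lemma phi_nonneg: "0 \<le> x \<Longrightarrow> phi_p p x = x powr (p - 1)"
proof (cases "x = 0")
  case False
  assume "0 \<le> x"
  then have "x > 0" using False by simp
  have "x powr (p - 1) = x powr ((p - 2) + 1)" by simp
  also have "\<dots> = x powr (p - 2) * x powr 1" by (rule powr_add)
  also have "\<dots> = x powr (p - 2) * x" using \<open>x > 0\<close> by simp
  finally show ?thesis using \<open>x > 0\<close> by (simp add: phi_p_def)
qed (simp add: phi_p_def)

lemma phi_nonpos: "x \<le> 0 \<Longrightarrow> phi_p p x = - ((-x) powr (p - 1))"
proof -
  assume "x \<le> 0"
  then have "phi_p p (-x) = (-x) powr (p - 1)" by (intro phi_nonneg) simp
  moreover have "phi_p p (-x) = - phi_p p x" by (simp add: phi_p_def)
  ultimately show ?thesis by simp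
qed

lemma phi_sign1: "phi_p p x \<ge> 0 \<Longrightarrow> x \<ge> 0"
proof (rule ccontr)
  assume "phi_p p x \<ge> 0" "\<not> x \<ge> 0"
  then have "phi_p p x = - ((-x) powr (p - 1))" by (intro phi_nonpos) simp
  moreover have "(-x) powr (p - 1) > 0" using \<open>\<not> x \<ge> 0\<close> by simp
  ultimately show False using \<open>phi_p p x \<ge> 0\<close> by simp
qed

lemma phi_sign2: "phi_p p x \<le> 0 \<Longrightarrow> x \<le> 0"
proof (rule ccontr)
  assume "phi_p p x \<le> 0" "\<not> x \<le> 0"
  then have "phi_p p x = x powr (p - 1)" by (intro phi_nonneg) simp
  moreover have "x powr (p - 1) > 0" using \<open>\<not> x \<le> 0\<close> by simp
  ultimately show False using \<open>phi_p p x \<le> 0\<close> by simp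
qed

lemma phi_zero[simp]: "phi_p p 0 = 0" by (simp add: phi_p_def)

lemma powr_cancel_le:
  fixes a b q :: real
  assumes "q > 0" "0 \<le> b" "a powr q \<le> b powr q"
  shows "a \<le> b"
proof (rule ccontr)
  assume "\<not> a \<le> b"
  then have "b powr q < a powr q" using powr_less_mono2[OF assms(1) assms(2)] by simp
  then show False using assms(3) by simp
qed

lemma K_powr:
  fixes A u q :: real
  assumes "q > 0" "A \<ge> 0" "u \<ge> 0"
  shows "(A powr (1/q) * u) powr q = A * u powr q"
proof -
  have "(A powr (1/q) * u) powr q = (A powr (1/q)) powr q * u powr q"
    using assms by (simp add: powr_mult)
  also have "(A powr (1/q)) powr q = A"
    using assms by (simp add: powr_powr)
  finally show ?thesis .
qed

theorem lemma2p1: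
  fixes p R1 R2 :: real and N :: nat and f u :: "real \<Rightarrow> real"
  assumes p: "1 < p"
    and N: "N \<ge> 1"
    and R: "0 \<le> R1" "R1 < R2"
    and f_cont: "continuous_on {0..} f"
    and f_C1: "\<exists>f'. (\<forall>s>0. (f has_real_derivative f' s) (at s)) \<and> continuous_on {0<..} f'"
    and f_eq: "f 0 = 0" "f 1 = 0" "\<And>s. 0 < s \<Longrightarrow> s < 1 \<Longrightarrow> f s < 0" "\<And>s. s > 1 \<Longrightarrow> f s > 0"
    and f_0: "\<exists>C0\<ge>0. ((\<lambda>s. f s / s powr (p - 1)) \<longlongrightarrow> - C0) (at_right 0)"
    and f_1: "\<exists>C1::ereal. C1 \<ge> 0 \<and> ((\<lambda>s. ereal (f s / (\<bar>s - 1\<bar> powr (p - 2) * (s - 1)))) \<longlongrightarrow> C1) (at 1)"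
    and sol: "radial_solution p N f R1 R2 u"
  shows "(\<exists>C\<ge>0. \<forall>r\<in>{R1..R2}. u r = - C) \<or> (\<forall>r\<in>{R1..R2}. u r > 0)"
proof -
  define q where "q = p - 1"
  have q: "q > 0" using p by (simp add: q_def)
  from sol obtain u' w' where
    du: "\<forall>r\<in>{R1..R2}. (u has_real_derivative u' r) (at r within {R1..R2})" and
    dW: "\<forall>r\<in>{R1..R2}. ((\<lambda>t. t ^ (N - 1) * phi_p p (u' t)) has_real_derivative w' r) (at r within {R1..R2})" and
    eq: "\<forall>r\<in>{R1<..<R2}. - w' r = r ^ (N - 1) * fhat f (u r)" and
    b1: "u' R1 = 0" and b2: "u' R2 = 0"
    unfolding radial_solution_def by blast
  define W where "W = (\<lambda>t. t ^ (N - 1) * phi_p p (u' t))"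
  have dW': "\<forall>r\<in>{R1..R2}. (W has_real_derivative w' r) (at r within {R1..R2})"
    using dW unfolding W_def .
  have cu: "continuous_on {R1..R2} u" using du by (intro DERIV_continuous_on) blast
  have cW: "continuous_on {R1..R2} W" using dW' by (intro DERIV_continuous_on) blast
  have du_at: "(u has_real_derivative u' x) (at x)" if "R1 < x" "x < R2" for x
  proof -
    have "(u has_real_derivative u' x) (at x within {R1..R2})" using du that by auto
    then show ?thesis using at_within_Icc_at[of R1 x R2] that by simp
  qed
  have dW_at: "(W has_real_derivative w' x) (at x)" if "R1 < x" "x < R2" for x
  proof -
    have "(W has_real_derivative w' x) (at x within {R1..R2})" using dW' that by auto
    then show ?thesis using at_within_Icc_at[of R1 x R2] that by simp
  qed
  have w'eq: "w' x = - (x ^ (N - 1) * fhat f (u x))" if "R1 < x" "x < R2" for x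
    using eq that by force
  have cu_sub: "continuous_on {a..b} u" if "R1 \<le> a" "b \<le> R2" for a b
    using continuous_on_subset[OF cu] that by auto
  have cW_sub: "continuous_on {a..b} W" if "R1 \<le> a" "b \<le> R2" for a b
    using continuous_on_subset[OF cW] that by auto
  have fneg: "fhat f s \<le> 0" if "s < 1" for s
    using f_eq(1) f_eq(3)[of s] that unfolding fhat_def by (cases "s = 0") auto
  obtain C eta where C: "C > 0" "eta > 0" "eta \<le> 1"
    and Cb: "\<And>s. 0 \<le> s \<Longrightarrow> s < eta \<Longrightarrow> - fhat f s \<le> C * s powr q"
  proof -
    from f_0 obtain C0 where C0: "C0 \<ge> 0" and lim: "((\<lambda>s. f s / s powr (p - 1)) \<longlongrightarrow> - C0) (at_right 0)"
      by blast
    have "eventually (\<lambda>s. f s / s powr (p - 1) > - C0 - 1) (at_right 0)"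
      using order_tendstoD(1)[OF lim, of "- C0 - 1"] by simp
    then obtain b where b: "b > 0" "\<And>s. 0 < s \<Longrightarrow> s < b \<Longrightarrow> f s / s powr (p - 1) > - C0 - 1"
      unfolding eventually_at_right_field by blast
    show thesis
    proof (rule that[of "C0 + 1" "min b 1"])
      fix s :: real assume s: "0 \<le> s" "s < min b 1"
      show "- fhat f s \<le> (C0 + 1) * s powr q"
      proof (cases "s = 0")
        case True then show ?thesis using f_eq(1) by (simp add: fhat_def)
      next
        case False
        then have sp: "s > 0" using s by simp
        have pos: "s powr q > 0" using sp by simp
        have "f s / s powr q > - C0 - 1" using b(2)[of s] sp s by (simp add: q_def)
        then have "f s > (- C0 - 1) * s powr q" using pos by (simp add: field_simps)
        then show ?thesis using s by (simp add: fhat_def algebra_simps)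
      qed
    qed (use C0 b in auto)
  qed
  have Npow_pos: "x ^ (N - 1) > 0" if "x > 0" for x :: real using that by simp

  have L: "\<exists>e>0. \<forall>r\<in>{R1..R2}. dist r r0 < e \<longrightarrow> u r \<le> 0 \<and> W r = 0"
    if r0: "r0 \<in> {R1..R2}" and ur0: "u r0 \<le> 0" and Wr0: "W r0 = 0" for r0
  proof (cases "u r0 < 0")
    case True
    obtain d where d: "d > 0" "\<forall>r\<in>{R1..R2}. dist r r0 < d \<longrightarrow> dist (u r) (u r0) < - u r0"
      using cu r0 True unfolding continuous_on_iff by (metis neg_0_less_iff_less)
    have dneg: "u r < 0" if "r \<in> {R1..R2}" "dist r r0 < d" for r
      using d(2) that by (auto simp: dist_real_def)
    show ?thesis
    proof (intro exI[of _ d] conjI ballI impI)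
      fix r assume r: "r \<in> {R1..R2}" "dist r r0 < d"
      show "u r \<le> 0" using dneg[OF r] by simp
      have const: "W b = W a" if ab: "a < b" "R1 \<le> a" "b \<le> R2" "dist a r0 < d" "dist b r0 < d" for a b
      proof (rule DERIV_isconst_end[OF ab(1) cW_sub[OF ab(2,3)]])
        fix x assume x: "a < x" "x < b"
        have "dist x r0 < d" using x ab by (auto simp: dist_real_def)
        then have "u x < 0" using dneg[of x] x ab by auto
        then have "w' x = 0" using w'eq[of x] x ab by (simp add: fhat_def)
        then show "(W has_real_derivative 0) (at x)" using dW_at[of x] x ab by simp
      qed
      have "W r = W r0"
      proof (cases r r0 rule: linorder_cases)
        case less then show ?thesis using const[of r r0] r r0 d by auto
      next
        case greater then show ?thesis using const[of r0 r] r r0 d by auto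
      qed simp
      then show "W r = 0" using Wr0 by simp
    qed (use d in simp)
  next
    case False
    then have u0: "u r0 = 0" using ur0 by simp
    obtain d where d: "d > 0" "\<forall>r\<in>{R1..R2}. dist r r0 < d \<longrightarrow> dist (u r) (u r0) < eta"
      using cu r0 C(2) unfolding continuous_on_iff by metis
    have ueta: "u r < eta" if "r \<in> {R1..R2}" "dist r r0 < d" for r
      using d(2) that u0 by (auto simp: dist_real_def)
    have w'nn: "w' t \<ge> 0" if "R1 < t" "t < R2" "dist t r0 < d" for t
    proof -
      have "fhat f (u t) \<le> 0" using fneg ueta[of t] that C(3) by auto
      moreover have "t ^ (N - 1) \<ge> 0" using that R by simp
      ultimately show ?thesis using w'eq[of t] that by (simp add: mult_nonneg_nonpos)
    qed
    have w'bd: "w' t \<le> t ^ (N - 1) * (C * u t powr q)"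
      if "R1 < t" "t < R2" "dist t r0 < d" "u t \<ge> 0" for t
    proof -
      have "- fhat f (u t) \<le> C * u t powr q" using Cb[of "u t"] ueta[of t] that by auto
      moreover have "t ^ (N - 1) \<ge> 0" using that R by simp
      ultimately show ?thesis using w'eq[of t] that
        by (metis minus_mult_right mult_left_mono)
    qed
    have RW: "W x \<ge> 0" if "x \<in> {R1..R2}" "r0 \<le> x" "x < r0 + d" for x
    proof -
      have "W r0 \<le> W x"
        by (rule mono_H[of r0 x W w']) (use that r0 in \<open>auto intro!: cW_sub dW_at w'nn simp: dist_real_def\<close>)
      then show ?thesis using Wr0 by simp
    qed
    have Ru': "u' x \<ge> 0" if "x \<in> {R1..R2}" "r0 < x" "x < r0 + d" for x
    proof -
      have xp: "x > 0" using that r0 R by auto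
      have "x ^ (N - 1) * phi_p p (u' x) \<ge> 0" using RW[of x] that by (simp add: W_def)
      then have "phi_p p (u' x) \<ge> 0" using Npow_pos[OF xp] by (simp add: zero_le_mult_iff)
      then show ?thesis by (rule phi_sign1)
    qed
    have Rmono: "u t \<le> u x" if "x \<in> {R1..R2}" "r0 \<le> t" "t \<le> x" "x < r0 + d" for t x
      by (rule mono_H[of t x u u']) (use that r0 in \<open>auto intro!: cu_sub du_at Ru'\<close>)
    have Rpos: "u x \<ge> 0" if "x \<in> {R1..R2}" "r0 \<le> x" "x < r0 + d" for x
      using Rmono[of x r0] that u0 by simp
    have RWb: "W x \<le> (x - r0) * (x ^ (N - 1) * (C * u x powr q))"
      if x: "x \<in> {R1..R2}" "r0 \<le> x" "x < r0 + d" for x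
    proof -
      define A where "A = x ^ (N - 1) * (C * u x powr q)"
      have "(\<lambda>t. t * A - W t) r0 \<le> (\<lambda>t. t * A - W t) x"
      proof (rule mono_H[of r0 x _ "\<lambda>t. A - w' t"])
        show "continuous_on {r0..x} (\<lambda>t. t * A - W t)"
          using cW_sub[of r0 x] x r0 by (auto intro!: continuous_intros)
        fix t assume t: "r0 < t" "t < x"
        have tI: "R1 < t" "t < R2" using t x r0 by auto
        show "((\<lambda>t. t * A - W t) has_real_derivative A - w' t) (at t)"
          using dW_at[OF tI] by (auto intro!: derivative_eq_intros)
        have dt: "dist t r0 < d" using t x by (auto simp: dist_real_def)
        have ut: "0 \<le> u t" "u t \<le> u x" using Rpos[of t] Rmono[of x t] t x tI by auto
        have "w' t \<le> t ^ (N - 1) * (C * u t powr q)" using w'bd[OF tI dt ut(1)] .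
        also have "\<dots> \<le> A" unfolding A_def
          using ut t tI R C q by (intro mult_mono power_mono powr_mono2 mult_left_mono) auto
        finally show "A - w' t \<ge> 0" by simp
      qed (use x in auto)
      then show ?thesis using Wr0 by (simp add: A_def algebra_simps)
    qed
    define K where "K = (d * C) powr (1 / q)"
    have K0: "K \<ge> 0" by (simp add: K_def)
    have RK: "u' x \<le> K * u x" if x: "x \<in> {R1..R2}" "r0 < x" "x < r0 + d" for x
    proof -
      have xp: "x > 0" using x r0 R by auto
      have ux: "u x \<ge> 0" using Rpos[of x] x by auto
      have "x ^ (N - 1) * u' x powr q = W x"
        using phi_nonneg[OF Ru'[OF x], of p] by (simp add: W_def q_def)
      also have "\<dots> \<le> (x - r0) * (x ^ (N - 1) * (C * u x powr q))" using RWb[of x] x by auto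
      finally have "x ^ (N - 1) * u' x powr q \<le> x ^ (N - 1) * ((x - r0) * (C * u x powr q))"
        by (simp add: algebra_simps)
      then have "u' x powr q \<le> (x - r0) * (C * u x powr q)"
        using Npow_pos[OF xp] by simp
      also have "\<dots> \<le> d * (C * u x powr q)"
        using x C by (intro mult_right_mono) auto
      also have "\<dots> = (K * u x) powr q"
        unfolding K_def using K_powr[OF q, of "d * C" "u x"] d C ux by simp
      finally show ?thesis using powr_cancel_le[OF q] K0 ux by simp
    qed
    define d1 where "d1 = min d (1 / (2 * (K + 1)))"
    have d1: "d1 > 0" "d1 \<le> d" using d K0 by (auto simp: d1_def)
    have Rfin: "u x \<le> 0 \<and> W x = 0" if x: "x \<in> {R1..R2}" "r0 \<le> x" "x < r0 + d1" for x
    proof (cases "x = r0")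
      case True then show ?thesis using u0 Wr0 by simp
    next
      case False
      then have xg: "r0 < x" using x by simp
      have xd: "x < r0 + d" using x d1 by simp
      have ux: "u x \<ge> 0" using Rpos[of x] x xd by auto
      have "(\<lambda>t. K * u x * t - u t) r0 \<le> (\<lambda>t. K * u x * t - u t) x"
      proof (rule mono_H[of r0 x _ "\<lambda>t. K * u x - u' t"])
        show "continuous_on {r0..x} (\<lambda>t. K * u x * t - u t)"
          using cu_sub[of r0 x] x r0 by (auto intro!: continuous_intros)
        fix t assume t: "r0 < t" "t < x"
        have tI: "R1 < t" "t < R2" using t x r0 by auto
        show "((\<lambda>t. K * u x * t - u t) has_real_derivative K * u x - u' t) (at t)"
          using du_at[OF tI] by (auto intro!: derivative_eq_intros)
        have "u' t \<le> K * u t" using RK[of t] t tI xd by auto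
        also have "\<dots> \<le> K * u x" using Rmono[of x t] t x xd K0 tI by (auto intro: mult_left_mono)
        finally show "K * u x - u' t \<ge> 0" by simp
      qed (use xg in auto)
      then have le: "u x \<le> (K * (x - r0)) * u x" using u0 by (simp add: algebra_simps)
      have "K * (x - r0) \<le> K * (1 / (2 * (K + 1)))"
        using x xg K0 d1_def by (intro mult_left_mono) auto
      also have "\<dots> < 1" using K0 by (simp add: field_simps)
      finally have Kl: "K * (x - r0) < 1" .
      have uxz: "u x \<le> 0"
      proof (rule ccontr)
        assume "\<not> u x \<le> 0"
        then have "(K * (x - r0)) * u x < 1 * u x" using Kl by (intro mult_strict_right_mono) auto
        then show False using le by simp
      qed
      have "u' x \<le> 0" using RK[of x] x xg xd uxz ux by simp
      moreover have "u' x \<ge> 0" using Ru'[of x] x xg xd by simp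
      ultimately have "u' x = 0" by simp
      then show ?thesis using uxz by (simp add: W_def)
    qed
    have Lfin: "\<exists>d2>0. \<forall>x\<in>{R1..R2}. r0 - d2 < x \<and> x \<le> r0 \<longrightarrow> u x \<le> 0 \<and> W x = 0"
    proof (cases "r0 = R1")
      case True
      show ?thesis
        by (rule exI[of _ 1]) (use True u0 Wr0 in auto)
    next
      case False
      then have r0p: "r0 > 0" "r0 > R1" using r0 R by auto
      define dl where "dl = min d (r0 / 2)"
      have dl: "dl > 0" "dl \<le> d" "dl \<le> r0 / 2" using d r0p by (auto simp: dl_def)
      have LW: "W x \<le> 0" if "x \<in> {R1..R2}" "r0 - dl < x" "x \<le> r0" for x
      proof -
        have "W x \<le> W r0"
          by (rule mono_H[of x r0 W w']) (use that r0 dl in \<open>auto intro!: cW_sub dW_at w'nn simp: dist_real_def\<close>)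
        then show ?thesis using Wr0 by simp
      qed
      have Lxp: "x > 0" if "r0 - dl < x" for x using that dl r0p by linarith
      have Lu': "u' x \<le> 0" if "x \<in> {R1..R2}" "r0 - dl < x" "x \<le> r0" for x
      proof -
        have xp: "x > 0" using Lxp that by auto
        have "x ^ (N - 1) * phi_p p (u' x) \<le> 0" using LW[of x] that by (simp add: W_def)
        then have "phi_p p (u' x) \<le> 0" using Npow_pos[OF xp] by (simp add: mult_le_0_iff)
        then show ?thesis by (rule phi_sign2)
      qed
      have Lmono: "u t \<le> u x" if "x \<in> {R1..R2}" "r0 - dl < x" "x \<le> t" "t \<le> r0" for t x
      proof -
        have "(\<lambda>t. - u t) x \<le> (\<lambda>t. - u t) t"
        proof (rule mono_H[of x t _ "\<lambda>t. - u' t"])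
          show "continuous_on {x..t} (\<lambda>t. - u t)"
            using cu_sub[of x t] that r0 by (auto intro!: continuous_intros)
          fix s assume s: "x < s" "s < t"
          have sI: "R1 < s" "s < R2" using s that r0 by auto
          show "((\<lambda>t. - u t) has_real_derivative - u' s) (at s)"
            using du_at[OF sI] by (auto intro!: derivative_eq_intros)
          show "- u' s \<ge> 0" using Lu'[of s] s sI that by auto
        qed (use that in auto)
        then show ?thesis by simp
      qed
      have Lpos: "u x \<ge> 0" if "x \<in> {R1..R2}" "r0 - dl < x" "x \<le> r0" for x
        using Lmono[of x r0] that u0 by simp
      have LWb: "- W x \<le> (r0 - x) * (r0 ^ (N - 1) * (C * u x powr q))"
        if x: "x \<in> {R1..R2}" "r0 - dl < x" "x \<le> r0" for x
      proof -
        define A where "A = r0 ^ (N - 1) * (C * u x powr q)"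
        have "(\<lambda>t. t * A - W t) x \<le> (\<lambda>t. t * A - W t) r0"
        proof (rule mono_H[of x r0 _ "\<lambda>t. A - w' t"])
          show "continuous_on {x..r0} (\<lambda>t. t * A - W t)"
            using cW_sub[of x r0] x r0 by (auto intro!: continuous_intros)
          fix t assume t: "x < t" "t < r0"
          have tI: "R1 < t" "t < R2" using t x r0 by auto
          show "((\<lambda>t. t * A - W t) has_real_derivative A - w' t) (at t)"
            using dW_at[OF tI] by (auto intro!: derivative_eq_intros)
          have dt: "dist t r0 < d" using t x dl by (auto simp: dist_real_def)
          have ut: "0 \<le> u t" "u t \<le> u x" using Lpos[of t] Lmono[of x t] t x tI by auto
          have "w' t \<le> t ^ (N - 1) * (C * u t powr q)" using w'bd[OF tI dt ut(1)] .
          also have "\<dots> \<le> A" unfolding A_def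
            using ut t tI R C q by (intro mult_mono power_mono powr_mono2 mult_left_mono) auto
          finally show "A - w' t \<ge> 0" by simp
        qed (use x in auto)
        then show ?thesis using Wr0 by (simp add: A_def algebra_simps)
      qed
      define KL where "KL = (dl * 2 ^ (N - 1) * C) powr (1 / q)"
      have KL0: "KL \<ge> 0" by (simp add: KL_def)
      have LK: "- u' x \<le> KL * u x" if x: "x \<in> {R1..R2}" "r0 - dl < x" "x \<le> r0" for x
      proof -
        have xp: "x > 0" using Lxp x by auto
        have ux: "u x \<ge> 0" using Lpos[of x] x by auto
        have U0: "C * u x powr q \<ge> 0" using C by simp
        have r0x: "r0 \<le> 2 * x" using x dl by linarith
        have "r0 ^ (N - 1) \<le> (2 * x) ^ (N - 1)" using r0x r0p by (intro power_mono) auto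
        then have r0pow: "r0 ^ (N - 1) \<le> 2 ^ (N - 1) * x ^ (N - 1)" by (simp add: power_mult_distrib)
        have "x ^ (N - 1) * (- u' x) powr q = - W x"
          using phi_nonpos[OF Lu'[OF x], of p] by (simp add: W_def q_def)
        also have "\<dots> \<le> (r0 - x) * (r0 ^ (N - 1) * (C * u x powr q))" using LWb[OF x] .
        also have "\<dots> \<le> dl * ((2 ^ (N - 1) * x ^ (N - 1)) * (C * u x powr q))"
          using x r0pow U0 dl by (intro mult_mono mult_right_mono) auto
        also have "\<dots> = x ^ (N - 1) * (dl * 2 ^ (N - 1) * C * u x powr q)" by (simp add: algebra_simps)
        finally have "(- u' x) powr q \<le> dl * 2 ^ (N - 1) * C * u x powr q"
          using Npow_pos[OF xp] by simp
        also have "\<dots> = (KL * u x) powr q"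
          unfolding KL_def using K_powr[OF q, of "dl * 2 ^ (N - 1) * C" "u x"] dl C ux by simp
        finally show ?thesis using powr_cancel_le[OF q] KL0 ux by simp
      qed
      define d2 where "d2 = min dl (1 / (2 * (KL + 1)))"
      have d2: "d2 > 0" "d2 \<le> dl" using dl KL0 by (auto simp: d2_def)
      have "\<forall>x\<in>{R1..R2}. r0 - d2 < x \<and> x \<le> r0 \<longrightarrow> u x \<le> 0 \<and> W x = 0"
      proof (intro ballI impI)
        fix x assume x: "x \<in> {R1..R2}" "r0 - d2 < x \<and> x \<le> r0"
        show "u x \<le> 0 \<and> W x = 0"
        proof (cases "x = r0")
          case True then show ?thesis using u0 Wr0 by simp
        next
          case False
          then have xl: "x < r0" using x by simp
          have xd: "r0 - dl < x" using x d2 by simp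
          have ux: "u x \<ge> 0" using Lpos[of x] x xd by auto
          have "(\<lambda>t. u t + KL * u x * t) x \<le> (\<lambda>t. u t + KL * u x * t) r0"
          proof (rule mono_H[of x r0 _ "\<lambda>t. u' t + KL * u x"])
            show "continuous_on {x..r0} (\<lambda>t. u t + KL * u x * t)"
              using cu_sub[of x r0] x r0 by (auto intro!: continuous_intros)
            fix t assume t: "x < t" "t < r0"
            have tI: "R1 < t" "t < R2" using t x r0 by auto
            show "((\<lambda>t. u t + KL * u x * t) has_real_derivative u' t + KL * u x) (at t)"
              using du_at[OF tI] by (auto intro!: derivative_eq_intros)
            have "- u' t \<le> KL * u t" using LK[of t] t tI xd by auto
            also have "\<dots> \<le> KL * u x" using Lmono[of x t] t x xd KL0 tI by (auto intro: mult_left_mono)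
            finally show "u' t + KL * u x \<ge> 0" by simp
          qed (use xl in auto)
          then have le: "u x \<le> (KL * (r0 - x)) * u x" using u0 by (simp add: algebra_simps)
          have "KL * (r0 - x) \<le> KL * (1 / (2 * (KL + 1)))"
            using x xl KL0 d2_def by (intro mult_left_mono) auto
          also have "\<dots> < 1" using KL0 by (simp add: field_simps)
          finally have Kl: "KL * (r0 - x) < 1" .
          have uxz: "u x \<le> 0"
          proof (rule ccontr)
            assume "\<not> u x \<le> 0"
            then have "(KL * (r0 - x)) * u x < 1 * u x" using Kl by (intro mult_strict_right_mono) auto
            then show False using le by simp
          qed
          have "- u' x \<le> 0" using LK[of x] x xl xd uxz ux by simp
          moreover have "u' x \<le> 0" using Lu'[of x] x xl xd by simp
          ultimately have "u' x = 0" by simp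
          then show ?thesis using uxz by (simp add: W_def)
        qed
      qed
      then show ?thesis using d2 by blast
    qed
    then obtain d2 where d2: "d2 > 0" "\<forall>x\<in>{R1..R2}. r0 - d2 < x \<and> x \<le> r0 \<longrightarrow> u x \<le> 0 \<and> W x = 0"
      by blast
    have "\<forall>r\<in>{R1..R2}. dist r r0 < min d1 d2 \<longrightarrow> u r \<le> 0 \<and> W r = 0"
    proof (intro ballI impI)
      fix r assume r: "r \<in> {R1..R2}" "dist r r0 < min d1 d2"
      show "u r \<le> 0 \<and> W r = 0"
      proof (cases "r0 \<le> r")
        case True then show ?thesis using Rfin[of r] r by (auto simp: dist_real_def)
      next
        case False then show ?thesis using d2(2) r by (auto simp: dist_real_def)
      qed
    qed
    then show ?thesis using d1 d2 by (intro exI[of _ "min d1 d2"]) auto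
  qed
  obtain rm where rm: "rm \<in> {R1..R2}" "\<forall>y\<in>{R1..R2}. u rm \<le> u y"
    using continuous_attains_inf[OF compact_Icc _ cu] R by auto
  show ?thesis
  proof (cases "u rm > 0")
    case True
    have "\<forall>r\<in>{R1..R2}. u r > 0"
    proof
      fix r assume "r \<in> {R1..R2}"
      then have "u rm \<le> u r" using rm(2) by blast
      then show "u r > 0" using True by linarith
    qed
    then show ?thesis by blast
  next
    case False
    have u'rm: "u' rm = 0"
    proof (cases "rm = R1 \<or> rm = R2")
      case True then show ?thesis using b1 b2 by auto
    next
      case False
      then have rmi: "R1 < rm" "rm < R2" using rm(1) by auto
      show ?thesis
      proof (rule DERIV_local_min[OF du_at[OF rmi], of "min (rm - R1) (R2 - rm)"])
        show "0 < min (rm - R1) (R2 - rm)" using rmi by simp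
        show "\<forall>y. \<bar>rm - y\<bar> < min (rm - R1) (R2 - rm) \<longrightarrow> u rm \<le> u y"
        proof (intro allI impI)
          fix y assume "\<bar>rm - y\<bar> < min (rm - R1) (R2 - rm)"
          then have "y \<in> {R1..R2}" by (simp add: abs_less_iff)
          then show "u rm \<le> u y" using rm(2) by blast
        qed
      qed
    qed
    have Wrm: "W rm = 0" using u'rm by (simp add: W_def)
    define T where "T = {r\<in>{R1..R2}. u r \<le> 0 \<and> W r = 0}"
    have "T = {} \<or> T = {R1..R2}"
    proof (rule connected_clopen[THEN iffD1, rule_format, OF connected_Icc], rule conjI)
      show "openin (top_of_set {R1..R2}) T"
        unfolding openin_euclidean_subtopology_iff
      proof (intro conjI ballI)
        show "T \<subseteq> {R1..R2}" by (auto simp: T_def)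
        fix x assume "x \<in> T"
        then have x: "x \<in> {R1..R2}" "u x \<le> 0" "W x = 0" by (auto simp: T_def)
        from L[OF x] obtain e where "e > 0" "\<forall>r\<in>{R1..R2}. dist r x < e \<longrightarrow> u r \<le> 0 \<and> W r = 0"
          by blast
        then show "\<exists>e>0. \<forall>x'\<in>{R1..R2}. dist x' x < e \<longrightarrow> x' \<in> T" by (auto simp: T_def)
      qed
      have c1: "closedin (top_of_set {R1..R2}) ({R1..R2} \<inter> u -` {..0})"
        by (rule continuous_closedin_preimage[OF cu]) simp
      have c2: "closedin (top_of_set {R1..R2}) ({R1..R2} \<inter> W -` {0})"
        by (rule continuous_closedin_preimage[OF cW]) simp
      have "T = ({R1..R2} \<inter> u -` {..0}) \<inter> ({R1..R2} \<inter> W -` {0})"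
        unfolding T_def by blast
      then show "closedin (top_of_set {R1..R2}) T"
        using closedin_Int[OF c1 c2] by simp
    qed
    moreover have "rm \<in> T" using rm False Wrm by (auto simp: T_def)
    ultimately have TI: "T = {R1..R2}" by blast
    have u'z: "u' x = 0" if "R1 < x" "x < R2" for x
    proof -
      have "x \<in> T" using TI that by simp
      then have "W x = 0" by (simp add: T_def)
      moreover have "x > 0" using that R by simp
      ultimately have "phi_p p (u' x) = 0" by (simp add: W_def)
      then show ?thesis using phi_sign1[of p "u' x"] phi_sign2[of p "u' x"] by simp
    qed
    have uc: "u r = u R1" if "r \<in> {R1..R2}" for r
    proof (cases "r = R1")
      case False
      then have "R1 < r" using that by simp
      then show ?thesis
      proof (rule DERIV_isconst_end[of R1 r u])
        show "continuous_on {R1..r} u" using cu_sub[of R1 r] that by simp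
        fix x assume "R1 < x" "x < r"
        then show "(u has_real_derivative 0) (at x)" using du_at[of x] u'z[of x] that by simp
      qed
    qed simp
    have "R1 \<in> T" using TI R by simp
    then have "u R1 \<le> 0" by (simp add: T_def)
    have "\<forall>r\<in>{R1..R2}. u r = - (- u R1)"
    proof
      fix r assume "r \<in> {R1..R2}"
      then have "u r = u R1" by (rule uc)
      then show "u r = - (- u R1)" by simp
    qed
    moreover have "- u R1 \<ge> 0" using \<open>u R1 \<le> 0\<close> by simp
    ultimately show ?thesis by blast
  qed
qed

end
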